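(* Let $G=(V,E)$ be a finite directed graph and $v_g\in V$ such that every vertex $v\in V$ has a directed path to $v_g$. Let $E'$ be $E$ with all edges out of $v_g$ removed, and build the environment $\mathcal{G}=(\mathcal{S},\mathcal{E})$ with $\mathcal{S}=V\cup\{s_f\}$ ($s_f$ a new vertex), $s_0:=v_g$, and $\mathcal{E}=\{(w\to u):(u\to w)\in E'\}\cup\{(s\to s_f): s\in V\}$. Then $\mathcal{G}$ is a GFlowNet environment with terminal set $\mathcal{X}=V$, and in $\mathcal{G}$ the quantity $\ell(v)$ equals the distance $d_G(v,v_g)$ from $v$ to $v_g$ in $G$. Let $\mathcal{R}:V\to(0,\infty)$ be arbitrary with $\mathcal{Z}=\sum_{v\in V}\mathcal{R}(v)$, and let $P_B$ be a backward policy on $\mathcal{G}$ with $\mathbb{E}[n_\tau]<\infty$ that minimizes $\mathbb{E}[n_\tau]$ among all backward policies satisfying $P_B(v\mid s_f)=\mathcal{R}(v)/\mathcal{Z}$ for all $v\in V$ and having finite $\mathbb{E}[n_\tau]$. Then for every $v\in V$, every sequence $v=u_0,u_1,\dots,u_k=v_g$ with $u_1,\dots,u_{k-1}\ne v_g$ and $\prod_{i=1}^{k}P_B(u_i\mid u_{i-1})>0$ is a shortest directed path from $v$ to $v_g$ in $G$ (i.e. each $(u_{i-1}\to u_i)\in E$ and $k=d_G(v,v_g)$). In particular, for uniform reward $\mathcal{R}\equiv1$ the minimal value is $\mathbb{E}[n_\tau]=\frac{1}{|V|}\sum_{v\in V}d_G(v,v_g)$.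
   Context: A GFlowNet environment is a finite directed graph $\mathcal{G}=(\mathcal{S},\mathcal{E})$ (possibly containing cycles) with a distinguished initial state $s_0$ having no incoming edges and a distinguished sink state $s_f$ having no outgoing edges, such that every state $s\in\mathcal{S}$ is reachable by a directed path from $s_0$ and $s_f$ is reachable by a directed path from $s$. A trajectory is a finite sequence $\tau=(s_0\to s_1\to\dots\to s_{n_\tau}\to s_f)$ with each consecutive pair an edge of $\mathcal{E}$ and $s_1,\dots,s_{n_\tau}\notin\{s_0,s_f\}$; $n_\tau\ge0$ is its length. The terminal states are $\mathcal{X}=\{s:(s\to s_f)\in\mathcal{E}\}$. For $s\in\mathcal{S}$, $\ell(s)$ denotes the number of edges in a shortest directed path from $s_0$ to $s$ in $\mathcal{G}$. A backward policy $P_B$ assigns to each $s'\in\mathcal{S}\setminus\{s_0\}$ a probability distribution $P_B(\cdot\mid s')$ on its parents $\{s:(s\to s')\in\mathcal{E}\}$ (zero probabilities allowed). It defines a Markov chain $X_0=s_f$, $\Pr[X_t=s\mid X_{t-1}=s']=P_B(s\mid s')$, with $s_0$ absorbing; letting $T$ be the hitting time of $s_0$, set $n_\tau=T-1$ (with $n_\tau=\infty$ if $s_0$ is never hit), and $\mathbb{E}[n_\tau]$ is its expectation. $d_G(v,v_g)$ is the number of edges in a shortest directed path from $v$ to $v_g$ in $G$. *)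

theory Defs
  imports "HOL-Analysis.Analysis"
begin

text \<open>A directed graph is an edge relation. The distance d(v,w) is the number of edges of a
shortest directed path from v to w (only used when w is reachable from v).\<close>

definition dist_G :: "('s \<times> 's) set \<Rightarrow> 's \<Rightarrow> 's \<Rightarrow> nat" where
  "dist_G Ed v w = (LEAST n. (v, w) \<in> Ed ^^ n)"

definition gfn_env :: "'s set \<Rightarrow> ('s \<times> 's) set \<Rightarrow> 's \<Rightarrow> 's \<Rightarrow> bool" where
  "gfn_env S Ed s0 sf \<longleftrightarrow>
     finite S \<and> Ed \<subseteq> S \<times> S \<and> s0 \<in> S \<and> sf \<in> S \<and> s0 \<noteq> sf \<and>
     (\<forall>s. (s, s0) \<notin> Ed) \<and> (\<forall>s. (sf, s) \<notin> Ed) \<and>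
     (\<forall>s\<in>S. (s0, s) \<in> Ed\<^sup>* \<and> (s, sf) \<in> Ed\<^sup>*)"

definition terminal_states :: "('s \<times> 's) set \<Rightarrow> 's \<Rightarrow> 's set" where
  "terminal_states Ed sf = {s. (s, sf) \<in> Ed}"

definition ell :: "('s \<times> 's) set \<Rightarrow> 's \<Rightarrow> 's \<Rightarrow> nat" where
  "ell Ed s0 s = dist_G Ed s0 s"

text \<open>A backward policy: \<open>P s s'\<close> is \<open>P_B(s | s')\<close>, a probability distribution on the
parents of each state \<open>s' \<noteq> s0\<close>.\<close>
definition backward_policy ::
  "'s set \<Rightarrow> ('s \<times> 's) set \<Rightarrow> 's \<Rightarrow> ('s \<Rightarrow> 's \<Rightarrow> real) \<Rightarrow> bool" where
  "backward_policy S Ed s0 P \<longleftrightarrow>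
     (\<forall>s'\<in>S - {s0}. (\<forall>s. 0 \<le> P s s') \<and> (\<forall>s. (s, s') \<notin> Ed \<longrightarrow> P s s' = 0) \<and>
        (\<Sum>s\<in>{s. (s, s') \<in> Ed}. P s s') = 1)"

text \<open>\<open>hit_prob Ed s0 P t s\<close> = probability that the backward Markov chain started at \<open>s\<close>
(with \<open>s0\<close> absorbing) hits \<open>s0\<close> for the first time at step \<open>t\<close>.\<close>
fun hit_prob :: "('s \<times> 's) set \<Rightarrow> 's \<Rightarrow> ('s \<Rightarrow> 's \<Rightarrow> real) \<Rightarrow> nat \<Rightarrow> 's \<Rightarrow> real" where
  "hit_prob Ed s0 P 0 s = (if s = s0 then 1 else 0)"
| "hit_prob Ed s0 P (Suc t) s =
     (if s = s0 then 0 else (\<Sum>p\<in>{p. (p, s) \<in> Ed}. P p s * hit_prob Ed s0 P t p))"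

text \<open>\<open>E[n_\<tau>]\<close> with \<open>n_\<tau> = T - 1\<close>, \<open>T\<close> the hitting time of \<open>s0\<close> from \<open>X_0 = sf\<close>,
and \<open>n_\<tau> = \<infinity>\<close> on the event that \<open>s0\<close> is never hit.\<close>
definition expected_len ::
  "('s \<times> 's) set \<Rightarrow> 's \<Rightarrow> 's \<Rightarrow> ('s \<Rightarrow> 's \<Rightarrow> real) \<Rightarrow> ennreal" where
  "expected_len Ed s0 sf P =
     (\<Sum>t. ennreal (hit_prob Ed s0 P (Suc t) sf) * of_nat t)
     + (if (\<Sum>t. ennreal (hit_prob Ed s0 P t sf)) < 1 then (top::ennreal) else 0)"

text \<open>States: \<open>Some v\<close> for \<open>v \<in> V\<close>, and \<open>None\<close> is the new sink \<open>s_f\<close>; \<open>s0 = Some v_g\<close>.\<close>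
definition env_states :: "'a set \<Rightarrow> 'a option set" where
  "env_states V = Some ` V \<union> {None}"

definition env_edges :: "'a set \<Rightarrow> ('a \<times> 'a) set \<Rightarrow> 'a \<Rightarrow> ('a option \<times> 'a option) set" where
  "env_edges V E vg =
     {(Some w, Some u) | u w. (u, w) \<in> E \<and> u \<noteq> vg} \<union> {(Some s, None) | s. s \<in> V}"

end

theory Submission
  imports Defs
begin

lemma hit_nonneg:
  assumes sub: "Ed \<subseteq> S \<times> S" and pol: "backward_policy S Ed s0 P" and s: "s \<in> S"
  shows "0 \<le> hit_prob Ed s0 P t s"
  using s
proof (induction t arbitrary: s)
  case 0 then show ?case by simp
next
  case (Suc t)
  show ?case
  proof (cases "s = s0")
    case True then show ?thesis by simp
  next
    case False
    have "\<forall>p\<in>{p. (p, s) \<in> Ed}. 0 \<le> P p s * hit_prob Ed s0 P t p"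
    proof
      fix p assume "p \<in> {p. (p, s) \<in> Ed}"
      then have "p \<in> S" using sub by auto
      moreover have "0 \<le> P p s" using pol Suc.prems False unfolding backward_policy_def by auto
      ultimately show "0 \<le> P p s * hit_prob Ed s0 P t p" using Suc.IH by simp
    qed
    then show ?thesis using False by (simp only: hit_prob.simps if_False) (rule sum_nonneg, blast)
  qed
qed

lemma hit_psum:
  assumes sub: "Ed \<subseteq> S \<times> S" and fin: "finite S" and pol: "backward_policy S Ed s0 P" and s: "s \<in> S"
  shows "(\<Sum>t<n. hit_prob Ed s0 P t s) \<le> 1"
  using s
proof (induction n arbitrary: s)
  case 0 then show ?case by simp
next
  case (Suc n)
  have eq: "(\<Sum>t<Suc n. hit_prob Ed s0 P t s) = hit_prob Ed s0 P 0 s + (\<Sum>t<n. hit_prob Ed s0 P (Suc t) s)"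
    by (rule sum.lessThan_Suc_shift)
  show ?case
  proof (cases "s = s0")
    case True then show ?thesis using eq by simp
  next
    case False
    let ?Pa = "{p. (p, s) \<in> Ed}"
    have finPa: "finite ?Pa" using fin sub by (metis (no_types, lifting) finite_subset mem_Collect_eq mem_Sigma_iff subset_eq)
    have "(\<Sum>t<n. hit_prob Ed s0 P (Suc t) s) = (\<Sum>t<n. \<Sum>p\<in>?Pa. P p s * hit_prob Ed s0 P t p)"
      using False by simp
    also have "\<dots> = (\<Sum>p\<in>?Pa. P p s * (\<Sum>t<n. hit_prob Ed s0 P t p))"
      by (simp add: sum.swap[of _ "{..<n}"] sum_distrib_left)
    also have "\<dots> \<le> (\<Sum>p\<in>?Pa. P p s * 1)"
    proof (rule sum_mono)
      fix p assume "p \<in> ?Pa"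
      then have "p \<in> S" using sub by auto
      moreover have "0 \<le> P p s" using pol Suc.prems False unfolding backward_policy_def by auto
      ultimately show "P p s * (\<Sum>t<n. hit_prob Ed s0 P t p) \<le> P p s * 1"
        using Suc.IH by (simp add: mult_left_le)
    qed
    also have "\<dots> = 1" using pol Suc.prems False unfolding backward_policy_def by auto
    finally show ?thesis using eq False by simp
  qed
qed

lemma hit_le1:
  assumes sub: "Ed \<subseteq> S \<times> S" and fin: "finite S" and pol: "backward_policy S Ed s0 P" and s: "s \<in> S"
  shows "hit_prob Ed s0 P t s \<le> 1"
proof -
  have "hit_prob Ed s0 P t s \<le> (\<Sum>t'<Suc t. hit_prob Ed s0 P t' s)"
    by (rule member_le_sum) (auto intro: hit_nonneg[OF sub pol s])
  also have "\<dots> \<le> 1" by (rule hit_psum[OF sub fin pol s])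
  finally show ?thesis .
qed

lemma hit_summable:
  assumes sub: "Ed \<subseteq> S \<times> S" and fin: "finite S" and pol: "backward_policy S Ed s0 P" and s: "s \<in> S"
  shows "summable (\<lambda>t. hit_prob Ed s0 P t s)" and "(\<Sum>t. hit_prob Ed s0 P t s) \<le> 1"
proof -
  show sm: "summable (\<lambda>t. hit_prob Ed s0 P t s)"
  proof (rule bounded_imp_summable)
    show "\<And>n. 0 \<le> hit_prob Ed s0 P n s" by (rule hit_nonneg[OF sub pol s])
    fix n
    have "(\<Sum>k\<le>n. hit_prob Ed s0 P k s) = (\<Sum>k<Suc n. hit_prob Ed s0 P k s)"
      using lessThan_Suc_atMost by simp
    also have "\<dots> \<le> 1" by (rule hit_psum[OF sub fin pol s])
    finally show "(\<Sum>k\<le>n. hit_prob Ed s0 P k s) \<le> 1" .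
  qed
  show "(\<Sum>t. hit_prob Ed s0 P t s) \<le> 1"
    by (rule suminf_le_const[OF sm]) (rule hit_psum[OF sub fin pol s])
qed

locale gsetup =
  fixes V :: "'a set" and E :: "('a \<times> 'a) set" and vg :: 'a
  assumes finV: "finite V" and EV: "E \<subseteq> V \<times> V" and vgV: "vg \<in> V"
    and reach: "\<forall>v\<in>V. (v, vg) \<in> E\<^sup>*"
begin

abbreviation "S \<equiv> env_states V"
abbreviation "Ed \<equiv> env_edges V E vg"
abbreviation "d w \<equiv> dist_G E w vg"

lemma Ed_iff: "(a, b) \<in> Ed \<longleftrightarrow>
   (\<exists>u w. a = Some w \<and> b = Some u \<and> (u, w) \<in> E \<and> u \<noteq> vg) \<or> (\<exists>s. a = Some s \<and> b = None \<and> s \<in> V)"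
  unfolding env_edges_def by auto

lemma Ed_Some_Some[simp]: "(Some w, Some u) \<in> Ed \<longleftrightarrow> (u, w) \<in> E \<and> u \<noteq> vg"
  unfolding env_edges_def by auto
lemma Ed_Some_None[simp]: "(Some w, None) \<in> Ed \<longleftrightarrow> w \<in> V"
  unfolding env_edges_def by auto
lemma Ed_None[simp]: "(None, b) \<notin> Ed"
  unfolding env_edges_def by auto

lemma finS: "finite S" unfolding env_states_def using finV by simp
lemma subS: "Ed \<subseteq> S \<times> S" unfolding env_states_def env_edges_def using EV by auto

lemma d_path: "w \<in> V \<Longrightarrow> (w, vg) \<in> E ^^ d w"
  unfolding dist_G_def using reach rtrancl_power by (metis (mono_tags, lifting) LeastI_ex)
lemma d_le: "(w, vg) \<in> E ^^ n \<Longrightarrow> d w \<le> n"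
  unfolding dist_G_def by (rule Least_le)
lemma d_vg[simp]: "d vg = 0"
  using d_le[of vg 0] by simp
lemma d_zero: "w \<in> V \<Longrightarrow> d w = 0 \<Longrightarrow> w = vg"
  using d_path[of w] by simp
lemma d_edge: "(w, x) \<in> E \<Longrightarrow> d w \<le> Suc (d x)"
proof -
  assume e: "(w, x) \<in> E"
  then have "x \<in> V" using EV by auto
  then show ?thesis using d_le relpow_Suc_I2[OF e d_path] by blast
qed
lemma d_next: "w \<in> V \<Longrightarrow> w \<noteq> vg \<Longrightarrow> \<exists>x. (w, x) \<in> E \<and> Suc (d x) = d w"
proof -
  assume w: "w \<in> V" "w \<noteq> vg"
  then obtain m where m: "d w = Suc m" using d_zero by (cases "d w") auto
  then obtain y where y: "(w, y) \<in> E" "(y, vg) \<in> E ^^ m"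
    using d_path[OF w(1)] relpow_Suc_D2 by metis
  have "d y \<le> m" using d_le y(2) .
  moreover have "d w \<le> Suc (d y)" using d_edge y(1) .
  ultimately show ?thesis using y m by (intro exI[of _ y]) auto
qed

definition nxt :: "'a \<Rightarrow> 'a" where "nxt w = (SOME x. (w, x) \<in> E \<and> Suc (d x) = d w)"
lemma nxt: "w \<in> V \<Longrightarrow> w \<noteq> vg \<Longrightarrow> (w, nxt w) \<in> E \<and> Suc (d (nxt w)) = d w"
  unfolding nxt_def using d_next by (rule someI_ex)

lemma parents_Some: "w \<noteq> vg \<Longrightarrow> {p. (p, Some w) \<in> Ed} = Some ` {x. (w, x) \<in> E}"
  unfolding env_edges_def by auto
lemma parents_None: "{p. (p, None) \<in> Ed} = Some ` V"
  unfolding env_edges_def by auto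

lemma finN: "finite {x. (w, x) \<in> E}"
  using finV EV by (metis (no_types, lifting) finite_subset mem_Collect_eq mem_Sigma_iff subsetI subset_eq)

lemma hit_Some: "w \<noteq> vg \<Longrightarrow> hit_prob Ed (Some vg) P (Suc t) (Some w) =
   (\<Sum>x\<in>{x. (w, x) \<in> E}. P (Some x) (Some w) * hit_prob Ed (Some vg) P t (Some x))"
  by (simp add: parents_Some sum.reindex)
lemma hit_None: "hit_prob Ed (Some vg) P (Suc t) None =
   (\<Sum>v\<in>V. P (Some v) None * hit_prob Ed (Some vg) P t (Some v))"
  by (simp add: parents_None sum.reindex)

lemma pol_Some:
  assumes "backward_policy S Ed (Some vg) P" "w \<in> V" "w \<noteq> vg"
  shows "0 \<le> P (Some x) (Some w)" "(w, x) \<notin> E \<Longrightarrow> P (Some x) (Some w) = 0"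
    "(\<Sum>x\<in>{x. (w, x) \<in> E}. P (Some x) (Some w)) = 1"
proof -
  have sS: "Some w \<in> S - {Some vg}" using assms unfolding env_states_def by auto
  then show "0 \<le> P (Some x) (Some w)" using assms(1) unfolding backward_policy_def by blast
  show "(w, x) \<notin> E \<Longrightarrow> P (Some x) (Some w) = 0" using sS assms(1) assms(3) unfolding backward_policy_def
    by (metis Ed_Some_Some)
  have "(\<Sum>p\<in>{p. (p, Some w) \<in> Ed}. P p (Some w)) = 1" using sS assms(1) unfolding backward_policy_def by blast
  then show "(\<Sum>x\<in>{x. (w, x) \<in> E}. P (Some x) (Some w)) = 1"
    by (simp add: parents_Some[OF assms(3)] sum.reindex)
qed

lemma pol_None:
  assumes "backward_policy S Ed (Some vg) P"
  shows "0 \<le> P (Some v) None" "(\<Sum>v\<in>V. P (Some v) None) = 1"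
proof -
  have sS: "None \<in> S - {Some vg}" unfolding env_states_def by auto
  then show "0 \<le> P (Some v) None" using assms(1) unfolding backward_policy_def by blast
  have "(\<Sum>p\<in>{p. (p, None) \<in> Ed}. P p None) = 1" using sS assms(1) unfolding backward_policy_def by blast
  then show "(\<Sum>v\<in>V. P (Some v) None) = 1" by (simp add: parents_None sum.reindex)
qed

lemma hit_zero_before: "w \<in> V \<Longrightarrow> t < d w \<Longrightarrow> hit_prob Ed (Some vg) P t (Some w) = 0"
proof (induction t arbitrary: w)
  case 0
  then have "w \<noteq> vg" by auto
  then show ?case by simp
next
  case (Suc t)
  then have wvg: "w \<noteq> vg" by auto
  have "\<forall>x\<in>{x. (w, x) \<in> E}. P (Some x) (Some w) * hit_prob Ed (Some vg) P t (Some x) = 0"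
  proof
    fix x assume x: "x \<in> {x. (w, x) \<in> E}"
    then have "x \<in> V" using EV by auto
    moreover have "t < d x" using d_edge[of w x] x Suc.prems by simp
    ultimately show "P (Some x) (Some w) * hit_prob Ed (Some vg) P t (Some x) = 0" using Suc.IH by simp
  qed
  then show ?case unfolding hit_Some[OF wvg] by (rule sum.neutral)
qed


lemma Ed_pow_back: "(Some a, Some b) \<in> Ed ^^ n \<Longrightarrow> (b, a) \<in> E ^^ n"
proof (induction n arbitrary: b)
  case 0 then show ?case by simp
next
  case (Suc n)
  then obtain y where y: "(Some a, y) \<in> Ed ^^ n" "(y, Some b) \<in> Ed" by auto
  then obtain c where c: "y = Some c" "(b, c) \<in> E" using Ed_iff by auto
  then have "(c, a) \<in> E ^^ n" using Suc.IH y(1) by simp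
  then show ?case using relpow_Suc_I2[OF c(2)] by simp
qed

lemma Ed_pow_fwd: "v \<in> V \<Longrightarrow> d v = n \<Longrightarrow> (Some vg, Some v) \<in> Ed ^^ n"
proof (induction n arbitrary: v)
  case 0 then have "v = vg" using d_zero by simp
  then show ?case by simp
next
  case (Suc n)
  then have vvg: "v \<noteq> vg" by auto
  have nv: "(v, nxt v) \<in> E" "Suc (d (nxt v)) = d v" using nxt[OF Suc.prems(1) vvg] by auto
  then have "nxt v \<in> V" using EV by auto
  then have "(Some vg, Some (nxt v)) \<in> Ed ^^ n" using Suc nv by simp
  moreover have "(Some (nxt v), Some v) \<in> Ed" using nv vvg by simp
  ultimately show ?case by (rule relpow_Suc_I)
qed

lemma ell_eq: "v \<in> V \<Longrightarrow> ell Ed (Some vg) (Some v) = d v"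
  unfolding ell_def dist_G_def[of Ed]
proof (rule Least_equality)
  assume "v \<in> V"
  then show "(Some vg, Some v) \<in> Ed ^^ d v" using Ed_pow_fwd by simp
next
  fix m assume "(Some vg, Some v) \<in> Ed ^^ m"
  then show "d v \<le> m" using Ed_pow_back d_le by blast
qed

lemma gfn: "gfn_env S Ed (Some vg) None"
  unfolding gfn_env_def
proof (intro conjI allI ballI)
  show "finite S" by (rule finS)
  show "Ed \<subseteq> S \<times> S" by (rule subS)
  show "Some vg \<in> S" "None \<in> S" using vgV unfolding env_states_def by auto
  show "Some vg \<noteq> None" by simp
  fix s
  show "(s, Some vg) \<notin> Ed" using Ed_iff by auto
  show "(None, s) \<notin> Ed" by simp
next
  fix s assume s: "s \<in> S"
  show "(Some vg, s) \<in> Ed\<^sup>*"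
  proof (cases s)
    case None
    then show ?thesis using vgV by (simp add: r_into_rtrancl)
  next
    case (Some v)
    then have "v \<in> V" using s unfolding env_states_def by auto
    then show ?thesis using Ed_pow_fwd Some relpow_imp_rtrancl by blast
  qed
  show "(s, None) \<in> Ed\<^sup>*"
  proof (cases s)
    case None then show ?thesis by simp
  next
    case (Some v)
    then have "v \<in> V" using s unfolding env_states_def by auto
    then show ?thesis using Some by (simp add: r_into_rtrancl)
  qed
qed

lemma term_states: "terminal_states Ed None = Some ` V"
  unfolding terminal_states_def using parents_None by simp

definition Pst :: "('a \<Rightarrow> real) \<Rightarrow> 'a option \<Rightarrow> 'a option \<Rightarrow> real" where
  "Pst q s s' = (case s' of None \<Rightarrow> (case s of Some v \<Rightarrow> if v \<in> V then q v else 0 | None \<Rightarrow> 0)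
     | Some w \<Rightarrow> if w \<noteq> vg \<and> s = Some (nxt w) then 1 else 0)"

lemma Pst_pol:
  assumes q0: "\<forall>v\<in>V. 0 \<le> q v" and q1: "(\<Sum>v\<in>V. q v) = 1"
  shows "backward_policy S Ed (Some vg) (Pst q)"
  unfolding backward_policy_def
proof (intro ballI conjI allI impI)
  fix s' s assume s': "s' \<in> S - {Some vg}"
  show "0 \<le> Pst q s s'" using q0 unfolding Pst_def by (auto split: option.splits)
  assume ns: "(s, s') \<notin> Ed"
  show "Pst q s s' = 0"
  proof (cases s')
    case None then show ?thesis using ns by (auto simp: Pst_def split: option.splits)
  next
    case (Some w)
    then have "w \<in> V" "w \<noteq> vg" using s' unfolding env_states_def by auto
    then show ?thesis using ns Some nxt[of w] by (auto simp: Pst_def)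
  qed
next
  fix s' assume s': "s' \<in> S - {Some vg}"
  show "(\<Sum>s\<in>{s. (s, s') \<in> Ed}. Pst q s s') = 1"
  proof (cases s')
    case None then show ?thesis using q1 by (simp add: parents_None sum.reindex Pst_def)
  next
    case (Some w)
    then have w: "w \<in> V" "w \<noteq> vg" using s' unfolding env_states_def by auto
    have "(\<Sum>s\<in>{s. (s, s') \<in> Ed}. Pst q s s') = (\<Sum>x\<in>{x. (w, x) \<in> E}. if x = nxt w then 1 else 0)"
      using w Some by (simp add: parents_Some sum.reindex Pst_def)
    also have "\<dots> = 1" using nxt[OF w] finN by simp
    finally show ?thesis .
  qed
qed

lemma Pst_hit: "w \<in> V \<Longrightarrow> hit_prob Ed (Some vg) (Pst q) t (Some w) = (if t = d w then 1 else 0)"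
proof (induction t arbitrary: w)
  case 0
  then show ?case using d_zero by auto
next
  case (Suc t)
  show ?case
  proof (cases "w = vg")
    case True then show ?thesis by simp
  next
    case False
    have nw: "(w, nxt w) \<in> E" "Suc (d (nxt w)) = d w" using nxt[OF Suc.prems False] by auto
    then have nV: "nxt w \<in> V" using EV by auto
    have "hit_prob Ed (Some vg) (Pst q) (Suc t) (Some w) =
       (\<Sum>x\<in>{x. (w, x) \<in> E}. (if x = nxt w then hit_prob Ed (Some vg) (Pst q) t (Some x) else 0))"
      unfolding hit_Some[OF False] using False by (intro sum.cong) (auto simp: Pst_def)
    also have "\<dots> = hit_prob Ed (Some vg) (Pst q) t (Some (nxt w))"
      using nw finN by simp
    also have "\<dots> = (if Suc t = d w then 1 else 0)" using Suc.IH[OF nV] nw by auto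
    finally show ?thesis .
  qed
qed

lemma Pst_len:
  assumes q0: "\<forall>v\<in>V. 0 \<le> q v" and q1: "(\<Sum>v\<in>V. q v) = 1"
  shows "expected_len Ed (Some vg) None (Pst q) = ennreal (\<Sum>v\<in>V. q v * real (d v))"
proof -
  define f where "f t = hit_prob Ed (Some vg) (Pst q) (Suc t) None" for t
  have f_eq: "f t = (\<Sum>v\<in>V. if t = d v then q v else 0)" for t
    unfolding f_def hit_None by (intro sum.cong) (auto simp: Pst_hit Pst_def)
  have f0: "0 \<le> f t" for t unfolding f_eq using q0 by (auto intro: sum_nonneg)
  have "(\<lambda>t. \<Sum>v\<in>V. if t = d v then q v * real (d v) else 0) sums (\<Sum>v\<in>V. q v * real (d v))"
    by (rule sums_sum) (rule sums_single)
  moreover have "(\<lambda>t. \<Sum>v\<in>V. if t = d v then q v * real (d v) else 0) = (\<lambda>t. f t * real t)"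
    unfolding f_eq sum_distrib_right by (intro ext sum.cong) auto
  ultimately have s1: "(\<lambda>t. f t * real t) sums (\<Sum>v\<in>V. q v * real (d v))" by simp
  have "(\<Sum>t. ennreal (hit_prob Ed (Some vg) (Pst q) (Suc t) None) * of_nat t) = (\<Sum>t. ennreal (f t * real t))"
    unfolding f_def[symmetric] using f0 by (simp add: ennreal_mult ennreal_of_nat_eq_real_of_nat)
  also have "\<dots> = ennreal (\<Sum>v\<in>V. q v * real (d v))"
    using f0 s1 by (simp add: suminf_ennreal2 sums_summable sums_unique[symmetric])
  finally have A: "(\<Sum>t. ennreal (hit_prob Ed (Some vg) (Pst q) (Suc t) None) * of_nat t) = ennreal (\<Sum>v\<in>V. q v * real (d v))" .
  have "(\<lambda>t. \<Sum>v\<in>V. if t = d v then q v else 0) sums (\<Sum>v\<in>V. q v)"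
    by (rule sums_sum) (rule sums_single)
  then have "(\<lambda>t. hit_prob Ed (Some vg) (Pst q) (Suc t) None) sums 1" using q1 unfolding f_def[symmetric] f_eq by simp
  then have s2: "(\<lambda>t. hit_prob Ed (Some vg) (Pst q) t None) sums 1" using sums_Suc_iff[of "\<lambda>t. hit_prob Ed (Some vg) (Pst q) t None" 1] by simp
  have h0: "0 \<le> hit_prob Ed (Some vg) (Pst q) t None" for t
    using hit_nonneg[OF subS Pst_pol[OF q0 q1]] unfolding env_states_def by auto
  have "(\<Sum>t. ennreal (hit_prob Ed (Some vg) (Pst q) t None)) = 1"
    using h0 s2 by (simp add: suminf_ennreal2 sums_summable sums_unique[symmetric])
  then show ?thesis unfolding expected_len_def A by simp
qed


lemma lower:
  assumes pol: "backward_policy S Ed (Some vg) P"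
    and fin: "expected_len Ed (Some vg) None P < top"
    and qpos: "\<forall>v\<in>V. 0 < P (Some v) None"
  shows "\<exists>L. expected_len Ed (Some vg) None P = ennreal L \<and>
     (\<Sum>v\<in>V. P (Some v) None * real (d v)) + (\<Sum>v\<in>V. P (Some v) None * (1 - hit_prob Ed (Some vg) P (d v) (Some v))) \<le> L"
proof -
  define q where "q v = P (Some v) None" for v
  define h where "h v t = hit_prob Ed (Some vg) P t (Some v)" for v t
  define f where "f t = hit_prob Ed (Some vg) P (Suc t) None" for t
  have f_eq: "f t = (\<Sum>v\<in>V. q v * h v t)" for t unfolding f_def q_def h_def hit_None ..
  have NS: "None \<in> S" unfolding env_states_def by auto
  have SS: "v \<in> V \<Longrightarrow> Some v \<in> S" for v unfolding env_states_def by auto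
  have h0: "v \<in> V \<Longrightarrow> 0 \<le> h v t" for v t unfolding h_def using hit_nonneg[OF subS pol SS] by blast
  have h1: "v \<in> V \<Longrightarrow> h v t \<le> 1" for v t unfolding h_def using hit_le1[OF subS finS pol SS] by blast
  have hsum: "v \<in> V \<Longrightarrow> summable (h v)" for v unfolding h_def using hit_summable(1)[OF subS finS pol SS] by blast
  have hsum1: "v \<in> V \<Longrightarrow> suminf (h v) \<le> 1" for v unfolding h_def using hit_summable(2)[OF subS finS pol SS] by blast
  have hz: "v \<in> V \<Longrightarrow> t < d v \<Longrightarrow> h v t = 0" for v t unfolding h_def using hit_zero_before by blast
  have q0: "v \<in> V \<Longrightarrow> 0 < q v" for v using qpos q_def by simp
  have q1: "(\<Sum>v\<in>V. q v) = 1" unfolding q_def using pol_None[OF pol] by simp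
  have f0: "0 \<le> f t" for t unfolding f_eq
    by (rule sum_nonneg) (use q0 h0 in \<open>auto intro: mult_nonneg_nonneg less_imp_le\<close>)
  define A where "A = (\<Sum>t. ennreal (hit_prob Ed (Some vg) P (Suc t) None) * of_nat t)"
  define B where "B = (\<Sum>t. ennreal (hit_prob Ed (Some vg) P t None))"
  have fin': "A + (if B < 1 then top else 0) < top" using fin unfolding expected_len_def A_def B_def .
  then have nB: "\<not> B < 1" by (cases "B < 1") auto
  with fin' have Atop: "A < top" by simp
  have A_eq: "A = (\<Sum>t. ennreal (f t * real t))"
    unfolding A_def f_def[symmetric] using f0 by (simp add: ennreal_mult ennreal_of_nat_eq_real_of_nat)
  have ft0: "0 \<le> f t * real t" for t using f0 by simp
  have fts: "summable (\<lambda>t. f t * real t)"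
    using summable_suminf_not_top[of "\<lambda>t. f t * real t", OF ft0] Atop A_eq by simp
  have A_eq2: "A = ennreal (\<Sum>t. f t * real t)" using A_eq suminf_ennreal2[OF ft0 fts] by simp
  have hN0: "0 \<le> hit_prob Ed (Some vg) P t None" for t using hit_nonneg[OF subS pol NS] .
  have hNs: "summable (\<lambda>t. hit_prob Ed (Some vg) P t None)" using hit_summable(1)[OF subS finS pol NS] .
  have "B = ennreal (\<Sum>t. hit_prob Ed (Some vg) P t None)" unfolding B_def using suminf_ennreal2[OF hN0 hNs] .
  then have Bge: "1 \<le> (\<Sum>t. hit_prob Ed (Some vg) P t None)" using nB
    by (simp add: not_less)
  have "(\<Sum>t. hit_prob Ed (Some vg) P t None) = (\<Sum>t. f t)"
    unfolding f_def using suminf_split_head[OF hNs] by simp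
  also have "\<dots> = (\<Sum>t. \<Sum>v\<in>V. q v * h v t)" unfolding f_eq ..
  also have "\<dots> = (\<Sum>v\<in>V. \<Sum>t. q v * h v t)" by (rule suminf_sum) (simp add: hsum)
  also have "\<dots> = (\<Sum>v\<in>V. q v * suminf (h v))" by (intro sum.cong refl) (rule suminf_mult, simp add: hsum)
  finally have "1 \<le> (\<Sum>v\<in>V. q v * suminf (h v))" using Bge by simp
  then have "(\<Sum>v\<in>V. q v * (1 - suminf (h v))) \<le> 0"
    using q1 by (simp add: right_diff_distrib sum_subtractf)
  moreover have nn: "\<forall>v\<in>V. 0 \<le> q v * (1 - suminf (h v))" using q0 hsum1 by (simp add: less_imp_le)
  moreover have "0 \<le> (\<Sum>v\<in>V. q v * (1 - suminf (h v)))" using nn by (intro sum_nonneg) blast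
  ultimately have "(\<Sum>v\<in>V. q v * (1 - suminf (h v))) = 0" by linarith
  then have "\<forall>v\<in>V. q v * (1 - suminf (h v)) = 0"
    using sum_nonneg_eq_0_iff[OF finV, of "\<lambda>v. q v * (1 - suminf (h v))"] nn by simp
  then have M1: "v \<in> V \<Longrightarrow> suminf (h v) = 1" for v
  proof -
    assume v: "v \<in> V" and z: "\<forall>v\<in>V. q v * (1 - suminf (h v)) = 0"
    then have "q v * (1 - suminf (h v)) = 0" by blast
    then show ?thesis using q0[OF v] by simp
  qed
  have ths: "v \<in> V \<Longrightarrow> summable (\<lambda>t. real t * h v t)" for v
  proof -
    assume v: "v \<in> V"
    have "summable (\<lambda>t. q v * (real t * h v t))"
    proof (rule summable_comparison_test'[OF fts])
      fix t :: nat
      have "q v * (real t * h v t) = (q v * h v t) * real t" by (simp only: mult_ac)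
      also have "\<dots> \<le> f t * real t" unfolding f_eq
        by (rule mult_right_mono, rule member_le_sum) (use v q0 h0 finV in \<open>auto intro: mult_nonneg_nonneg less_imp_le\<close>)
      finally show "norm (q v * (real t * h v t)) \<le> f t * real t" using q0[OF v] h0[OF v] by simp
    qed
    then show ?thesis using q0[OF v] by simp
  qed
  have "(\<Sum>t. f t * real t) = (\<Sum>t. \<Sum>v\<in>V. q v * (real t * h v t))"
    unfolding f_eq sum_distrib_right by (intro suminf_cong sum.cong) auto
  also have "\<dots> = (\<Sum>v\<in>V. \<Sum>t. q v * (real t * h v t))" by (rule suminf_sum) (simp add: ths)
  also have "\<dots> = (\<Sum>v\<in>V. q v * (\<Sum>t. real t * h v t))" by (intro sum.cong refl) (rule suminf_mult, simp add: ths)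
  finally have L_eq: "(\<Sum>t. f t * real t) = (\<Sum>v\<in>V. q v * (\<Sum>t. real t * h v t))" .
  have per: "v \<in> V \<Longrightarrow> real (d v) + 1 - h v (d v) \<le> (\<Sum>t. real t * h v t)" for v
  proof -
    assume v: "v \<in> V"
    have s1: "h v sums 1" using summable_sums[OF hsum[OF v]] M1[OF v] by simp
    have sg: "(\<lambda>t. real (d v) * h v t + h v t - (if t = d v then h v t else 0)) sums (real (d v) * 1 + 1 - h v (d v))"
      by (rule sums_diff[OF sums_add[OF sums_mult[OF s1] s1] sums_single])
    have sth: "(\<lambda>t. real t * h v t) sums (\<Sum>t. real t * h v t)" using ths[OF v] summable_sums by blast
    have pw: "real (d v) * h v t + h v t - (if t = d v then h v t else 0) \<le> real t * h v t" for t
    proof (cases "t < d v")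
      case True then show ?thesis using hz[OF v] by simp
    next
      case False
      show ?thesis
      proof (cases "t = d v")
        case True then show ?thesis by simp
      next
        case False2: False
        then have "real (d v) + 1 \<le> real t" using False by simp
        then have "(real (d v) + 1) * h v t \<le> real t * h v t" using h0[OF v] by (rule mult_right_mono)
        then show ?thesis using False2 by (simp add: algebra_simps)
      qed
    qed
    have "real (d v) * 1 + 1 - h v (d v) \<le> (\<Sum>t. real t * h v t)" by (rule sums_le[OF pw sg sth])
    then show ?thesis by simp
  qed
  have "(\<Sum>v\<in>V. q v * real (d v)) + (\<Sum>v\<in>V. q v * (1 - h v (d v))) = (\<Sum>v\<in>V. q v * (real (d v) + 1 - h v (d v)))"
    unfolding sum.distrib[symmetric] by (intro sum.cong refl) (simp add: algebra_simps)
  also have "\<dots> \<le> (\<Sum>v\<in>V. q v * (\<Sum>t. real t * h v t))"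
    by (intro sum_mono mult_left_mono per) (use q0 in \<open>auto intro: less_imp_le\<close>)
  finally have "(\<Sum>v\<in>V. q v * real (d v)) + (\<Sum>v\<in>V. q v * (1 - h v (d v))) \<le> (\<Sum>t. f t * real t)"
    using L_eq by simp
  moreover have "expected_len Ed (Some vg) None P = A" using nB unfolding expected_len_def A_def B_def by simp
  ultimately show ?thesis unfolding q_def h_def using A_eq2 by blast
qed

lemma strict:
  assumes pol: "backward_policy S Ed (Some vg) P" and w: "w \<in> V" "w \<noteq> vg"
    and x0: "(w, x0) \<in> E" "Suc (d x0) \<noteq> d w"
  shows "hit_prob Ed (Some vg) P (d w) (Some w) \<le> 1 - P (Some x0) (Some w)"
proof -
  obtain m where m: "d w = Suc m" using d_zero w by (cases "d w") auto
  have x0V: "x0 \<in> V" using x0 EV by auto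
  have "m < d x0" using d_edge[OF x0(1)] x0(2) m by simp
  then have hx0: "hit_prob Ed (Some vg) P m (Some x0) = 0" using hit_zero_before x0V by blast
  let ?N = "{x. (w, x) \<in> E}"
  have "hit_prob Ed (Some vg) P (d w) (Some w) = (\<Sum>x\<in>?N. P (Some x) (Some w) * hit_prob Ed (Some vg) P m (Some x))"
    unfolding m hit_Some[OF w(2)] ..
  also have "\<dots> \<le> (\<Sum>x\<in>?N. P (Some x) (Some w) - (if x = x0 then P (Some x) (Some w) else 0))"
  proof (rule sum_mono)
    fix x assume x: "x \<in> ?N"
    then have "Some x \<in> S" using EV unfolding env_states_def by auto
    then have "hit_prob Ed (Some vg) P m (Some x) \<le> 1" using hit_le1[OF subS finS pol] by blast
    then have "P (Some x) (Some w) * hit_prob Ed (Some vg) P m (Some x) \<le> P (Some x) (Some w)"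
      using pol_Some(1)[OF pol w] by (simp add: mult_left_le)
    then show "P (Some x) (Some w) * hit_prob Ed (Some vg) P m (Some x) \<le> P (Some x) (Some w) - (if x = x0 then P (Some x) (Some w) else 0)"
      using hx0 by auto
  qed
  also have "\<dots> = 1 - P (Some x0) (Some w)"
    using pol_Some(3)[OF pol w] x0(1) finN by (simp add: sum_subtractf)
  finally show ?thesis .
qed

end
theorem mainTheorem5:
  fixes V :: "'a set" and E :: "('a \<times> 'a) set" and vg :: 'a
    and R :: "'a \<Rightarrow> real" and PB :: "'a option \<Rightarrow> 'a option \<Rightarrow> real"
  assumes finV: "finite V" and EV: "E \<subseteq> V \<times> V" and vgV: "vg \<in> V"
    and reach: "\<forall>v\<in>V. (v, vg) \<in> E\<^sup>*"
    and Rpos: "\<forall>v\<in>V. R v > 0"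
    and PB_pol: "backward_policy (env_states V) (env_edges V E vg) (Some vg) PB"
    and PB_R: "\<forall>v\<in>V. PB (Some v) None = R v / (\<Sum>w\<in>V. R w)"
    and PB_fin: "expected_len (env_edges V E vg) (Some vg) None PB < (top::ennreal)"
    and PB_opt: "\<forall>P. backward_policy (env_states V) (env_edges V E vg) (Some vg) P
                   \<and> (\<forall>v\<in>V. P (Some v) None = R v / (\<Sum>w\<in>V. R w))
                   \<and> expected_len (env_edges V E vg) (Some vg) None P < (top::ennreal)
                   \<longrightarrow> expected_len (env_edges V E vg) (Some vg) None PB
                       \<le> expected_len (env_edges V E vg) (Some vg) None P"
  shows "gfn_env (env_states V) (env_edges V E vg) (Some vg) None
       \<and> terminal_states (env_edges V E vg) None = Some ` V
       \<and> (\<forall>v\<in>V. ell (env_edges V E vg) (Some vg) (Some v) = dist_G E v vg)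
       \<and> (\<forall>v\<in>V. \<forall>k. \<forall>u :: nat \<Rightarrow> 'a.
            u 0 = v \<and> u k = vg \<and> (\<forall>i<k. u i \<noteq> vg)
            \<and> (\<Prod>i\<in>{1..k}. PB (Some (u i)) (Some (u (i - 1)))) > 0
            \<longrightarrow> (\<forall>i\<in>{1..k}. (u (i - 1), u i) \<in> E) \<and> k = dist_G E v vg)
       \<and> ((\<forall>v\<in>V. R v = 1) \<longrightarrow>
            expected_len (env_edges V E vg) (Some vg) None PB
              = ennreal ((\<Sum>v\<in>V. real (dist_G E v vg)) / real (card V)))"
proof -
  interpret gsetup V E vg using finV EV vgV reach by unfold_locales
  define Z where "Z = (\<Sum>w\<in>V. R w)"
  define q where "q v = R v / Z" for v
  have Vne: "V \<noteq> {}" using vgV by auto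
  have Zpos: "Z > 0" unfolding Z_def using Rpos finV Vne by (intro sum_pos) auto
  have q0: "\<forall>v\<in>V. 0 \<le> q v" unfolding q_def using Rpos Zpos by (simp add: less_imp_le)
  have q1: "(\<Sum>v\<in>V. q v) = 1" unfolding q_def using Zpos by (simp add: sum_divide_distrib[symmetric] Z_def)
  have qPB: "v \<in> V \<Longrightarrow> PB (Some v) None = q v" for v using PB_R unfolding q_def Z_def by simp
  have ppol: "backward_policy S Ed (Some vg) (Pst q)" by (rule Pst_pol[OF q0 q1])
  have plen: "expected_len Ed (Some vg) None (Pst q) = ennreal (\<Sum>v\<in>V. q v * real (d v))"
    by (rule Pst_len[OF q0 q1])
  have pR: "\<forall>v\<in>V. Pst q (Some v) None = R v / (\<Sum>w\<in>V. R w)" unfolding Pst_def q_def Z_def by simp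
  have le: "expected_len Ed (Some vg) None PB \<le> ennreal (\<Sum>v\<in>V. q v * real (d v))"
    using PB_opt ppol pR plen by (metis ennreal_less_top)
  have qpos: "\<forall>v\<in>V. 0 < PB (Some v) None" using qPB Rpos Zpos unfolding q_def by simp
  obtain L where L: "expected_len Ed (Some vg) None PB = ennreal L"
    and Lge0: "(\<Sum>v\<in>V. PB (Some v) None * real (d v)) + (\<Sum>v\<in>V. PB (Some v) None * (1 - hit_prob Ed (Some vg) PB (d v) (Some v))) \<le> L"
    using lower[OF PB_pol PB_fin qpos] by blast
  have Lge: "(\<Sum>v\<in>V. q v * real (d v)) + (\<Sum>v\<in>V. q v * (1 - hit_prob Ed (Some vg) PB (d v) (Some v))) \<le> L"
    using Lge0 qPB by simp
  have Dnn: "0 \<le> (\<Sum>v\<in>V. q v * real (d v))" using q0 by (intro sum_nonneg) auto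
  have Lle: "L \<le> (\<Sum>v\<in>V. q v * real (d v))" using le L Dnn by (simp add: ennreal_le_iff)
  have SS: "v \<in> V \<Longrightarrow> Some v \<in> S" for v unfolding env_states_def by auto
  have nn: "\<forall>v\<in>V. 0 \<le> q v * (1 - hit_prob Ed (Some vg) PB (d v) (Some v))"
    using q0 hit_le1[OF subS finS PB_pol SS] by (simp add: mult_nonneg_nonneg)
  have "(\<Sum>v\<in>V. q v * (1 - hit_prob Ed (Some vg) PB (d v) (Some v))) \<le> 0" using Lge Lle by linarith
  moreover have "0 \<le> (\<Sum>v\<in>V. q v * (1 - hit_prob Ed (Some vg) PB (d v) (Some v)))" using nn by (intro sum_nonneg) blast
  ultimately have z: "(\<Sum>v\<in>V. q v * (1 - hit_prob Ed (Some vg) PB (d v) (Some v))) = 0" by linarith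
  then have "\<forall>v\<in>V. q v * (1 - hit_prob Ed (Some vg) PB (d v) (Some v)) = 0"
    using sum_nonneg_eq_0_iff[OF finV, of "\<lambda>v. q v * (1 - hit_prob Ed (Some vg) PB (d v) (Some v))"] nn by simp
  then have h1: "v \<in> V \<Longrightarrow> hit_prob Ed (Some vg) PB (d v) (Some v) = 1" for v
    using qpos qPB by (metis diff_eq_eq less_irrefl mult_eq_0_iff add_0)
  have rigid: "w \<in> V \<Longrightarrow> w \<noteq> vg \<Longrightarrow> 0 < PB (Some x) (Some w) \<Longrightarrow> (w, x) \<in> E \<and> Suc (d x) = d w" for w x
  proof -
    assume w: "w \<in> V" "w \<noteq> vg" and p: "0 < PB (Some x) (Some w)"
    have e: "(w, x) \<in> E" using pol_Some(2)[OF PB_pol w] p by force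
    show ?thesis
    proof (rule ccontr)
      assume "\<not> ((w, x) \<in> E \<and> Suc (d x) = d w)"
      then have "Suc (d x) \<noteq> d w" using e by blast
      then have "hit_prob Ed (Some vg) PB (d w) (Some w) \<le> 1 - PB (Some x) (Some w)" using strict[OF PB_pol w e] by blast
      then show False using h1[OF w(1)] p by simp
    qed
  qed
  have paths: "\<forall>v\<in>V. \<forall>k. \<forall>u :: nat \<Rightarrow> 'a.
            u 0 = v \<and> u k = vg \<and> (\<forall>i<k. u i \<noteq> vg)
            \<and> (\<Prod>i\<in>{1..k}. PB (Some (u i)) (Some (u (i - 1)))) > 0
            \<longrightarrow> (\<forall>i\<in>{1..k}. (u (i - 1), u i) \<in> E) \<and> k = dist_G E v vg"
  proof (intro ballI allI impI)
    fix v k and u :: "nat \<Rightarrow> 'a"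
    assume v: "v \<in> V" and H: "u 0 = v \<and> u k = vg \<and> (\<forall>i<k. u i \<noteq> vg)
            \<and> (\<Prod>i\<in>{1..k}. PB (Some (u i)) (Some (u (i - 1)))) > 0"
    have nz: "i \<in> {1..k} \<Longrightarrow> PB (Some (u i)) (Some (u (i - 1))) \<noteq> 0" for i
    proof
      assume "i \<in> {1..k}" "PB (Some (u i)) (Some (u (i - 1))) = 0"
      then have "(\<Prod>i\<in>{1..k}. PB (Some (u i)) (Some (u (i - 1)))) = 0" by (intro prod_zero) auto
      moreover have "0 < (\<Prod>i\<in>{1..k}. PB (Some (u i)) (Some (u (i - 1))))" using H by blast
      ultimately show False by linarith
    qed
    have step: "j < k \<Longrightarrow> u j \<in> V \<Longrightarrow> (u j, u (Suc j)) \<in> E \<and> Suc (d (u (Suc j))) = d (u j)" for j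
    proof -
      assume j: "j < k" "u j \<in> V"
      have ne: "u j \<noteq> vg" using H j by blast
      have "PB (Some (u (Suc j))) (Some (u j)) \<noteq> 0" using nz[of "Suc j"] j by simp
      moreover have "0 \<le> PB (Some (u (Suc j))) (Some (u j))" using pol_Some(1)[OF PB_pol j(2) ne] .
      ultimately have "0 < PB (Some (u (Suc j))) (Some (u j))" by simp
      then show ?thesis using rigid[OF j(2) ne] by blast
    qed
    have inv: "i \<le> k \<Longrightarrow> u i \<in> V \<and> d (u i) + i = d v" for i
    proof (induction i)
      case 0 then show ?case using H v by simp
    next
      case (Suc i)
      then have ih: "u i \<in> V" "d (u i) + i = d v" by auto
      have "(u i, u (Suc i)) \<in> E \<and> Suc (d (u (Suc i))) = d (u i)" using step[OF _ ih(1)] Suc.prems by simp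
      then show ?case using ih EV by auto
    qed
    have "\<forall>i\<in>{1..k}. (u (i - 1), u i) \<in> E"
    proof
      fix i assume i: "i \<in> {1..k}"
      then obtain j where j: "i = Suc j" "j < k" by (cases i) auto
      then show "(u (i - 1), u i) \<in> E" using step[OF j(2)] inv[of j] by simp
    qed
    moreover have "k = d v" using inv[of k] H by simp
    ultimately show "(\<forall>i\<in>{1..k}. (u (i - 1), u i) \<in> E) \<and> k = dist_G E v vg" by simp
  qed
  have unif: "(\<forall>v\<in>V. R v = 1) \<longrightarrow>
            expected_len (env_edges V E vg) (Some vg) None PB
              = ennreal ((\<Sum>v\<in>V. real (dist_G E v vg)) / real (card V))"
  proof
    assume R1: "\<forall>v\<in>V. R v = 1"
    have "L = (\<Sum>v\<in>V. q v * real (d v))" using Lle Lge z by linarith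
    moreover have "v \<in> V \<Longrightarrow> q v = 1 / real (card V)" for v unfolding q_def Z_def using R1 by simp
    ultimately have "L = (\<Sum>v\<in>V. real (d v) / real (card V))" by simp
    then show "expected_len (env_edges V E vg) (Some vg) None PB
              = ennreal ((\<Sum>v\<in>V. real (dist_G E v vg)) / real (card V))"
      using L by (simp add: sum_divide_distrib)
  qed
  show ?thesis using gfn term_states ell_eq paths unif by blast
qed

end
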